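(* Let $\mathcal{R}^*=\{z\in\mathbb{C}: z\ne n\pi i,\ n\in\mathbb{Z}\}$. There exist real-valued functions $C_1(x,y,t),C_2(t),C_3(t)\ge0$ ($x,y\in\mathbb{R}$, $t\in\mathcal{R}^*$), bounded on compact subsets of $\mathcal{R}^*$, such that for every $\lambda\in\mathbb{Z}_{\ge1}$ and $t\in\mathcal{R}^*$, \[ |\theta_\lambda(x,y,\boldsymbol\mu_\lambda,t)|\le\Big|\frac{\sqrt2 g}{1-e^{-2t}}\Big|C_1(x,y,t),\quad |\psi^\pm_\lambda(\boldsymbol\mu_\lambda,t)|\le\Big|\frac{2g^2}{1-e^{-2t}}\Big|C_2(t),\quad |\xi_\lambda(\boldsymbol\mu_\lambda,t)|\le\Big|\frac{2g^2}{1-e^{-2t}}\Big|C_3(t)\,\lambda, \] uniformly for $0\le\mu_1\le\mu_2\le\cdots\le\mu_\lambda\le1$.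
   Context: $g\in\mathbb{R}$ is fixed. For $\boldsymbol\mu_\lambda=(\mu_1,\dots,\mu_\lambda)$ and with the convention $\mu_0=0$: \[ \theta_\lambda(x,y,\boldsymbol\mu_\lambda,t)=\frac{2\sqrt2 g}{\sinh t}(x\cosh t-y)\frac{1-(-1)^\lambda}2-\sqrt2 g(x-y)\coth(\tfrac t2)+\frac{2\sqrt2 g(-1)^\lambda}{\sinh t}\sum_{\gamma=0}^\lambda(-1)^\gamma\big[x\cosh(t(1-\mu_\gamma))-y\cosh(t\mu_\gamma)\big], \] \[ \xi_\lambda(\boldsymbol\mu_\lambda,t)=-\frac{8g^2}{\sinh t}\sinh^2\!\big(\tfrac12t(1-\mu_\lambda)\big)(-1)^\lambda\sum_{\gamma=0}^\lambda(-1)^\gamma\cosh(t\mu_\gamma)-\frac{4g^2}{\sinh t}\sum_{\substack{0\le\alpha<\beta\le\lambda-1\\\beta-\alpha\ \mathrm{odd}}}\big(\cosh(t(\mu_{\beta+1}-1))-\cosh(t(\mu_\beta-1))\big)\big(\cosh(t\mu_\alpha)-\cosh(t\mu_{\alpha+1})\big), \] \[ \psi^-_\lambda(\boldsymbol\mu_\lambda,t)=\frac{4g^2}{\sinh t}\Big[\sum_{\gamma=0}^\lambda(-1)^\gamma\sinh\big(t(\tfrac12-\mu_\gamma)\big)\Big]^2,\qquad \psi^+_\lambda(\boldsymbol\mu_\lambda,t)=\frac{4g^2}{\sinh t}\Big[\sum_{\gamma=0}^\lambda(-1)^\gamma\cosh\big(t(\tfrac12-\mu_\gamma)\big)\Big]^2.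 \] *)

theory Defs
  imports "HOL-Analysis.Analysis"
begin

definition Rstar :: "complex set" where
  "Rstar = {z. \<forall>n::int. z \<noteq> of_int n * complex_of_real pi * \<i>}"

text \<open>Sequences mu are functions nat => real; only mu 1 .. mu lambda matter,
  and the convention mu_0 = 0 is enforced by overriding the value at 0.\<close>
definition mu0 :: "(nat \<Rightarrow> real) \<Rightarrow> nat \<Rightarrow> real" where
  "mu0 \<mu> = \<mu>(0 := 0)"

definition theta :: "real \<Rightarrow> nat \<Rightarrow> real \<Rightarrow> real \<Rightarrow> (nat \<Rightarrow> real) \<Rightarrow> complex \<Rightarrow> complex" where
  "theta g lam x y \<mu> t =
     2 * of_real (sqrt 2 * g) / sinh t * (of_real x * cosh t - of_real y) * ((1 - (-1)^lam) / 2)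
     - of_real (sqrt 2 * g * (x - y)) * (cosh (t/2) / sinh (t/2))
     + 2 * of_real (sqrt 2 * g) * (-1)^lam / sinh t *
       (\<Sum>\<gamma>=0..lam. (-1)^\<gamma> * (of_real x * cosh (t * of_real (1 - mu0 \<mu> \<gamma>))
                                  - of_real y * cosh (t * of_real (mu0 \<mu> \<gamma>))))"

definition xi :: "real \<Rightarrow> nat \<Rightarrow> (nat \<Rightarrow> real) \<Rightarrow> complex \<Rightarrow> complex" where
  "xi g lam \<mu> t =
     - of_real (8 * g^2) / sinh t * (sinh (t * of_real (1 - mu0 \<mu> lam) / 2))^2 * (-1)^lam
         * (\<Sum>\<gamma>=0..lam. (-1)^\<gamma> * cosh (t * of_real (mu0 \<mu> \<gamma>)))
     - of_real (4 * g^2) / sinh t *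
       (\<Sum>(\<alpha>,\<beta>)\<in>{(\<alpha>,\<beta>). \<alpha> < \<beta> \<and> \<beta> \<le> lam - 1 \<and> odd (\<beta> - \<alpha>)}.
          (cosh (t * of_real (mu0 \<mu> (\<beta>+1) - 1)) - cosh (t * of_real (mu0 \<mu> \<beta> - 1)))
          * (cosh (t * of_real (mu0 \<mu> \<alpha>)) - cosh (t * of_real (mu0 \<mu> (\<alpha>+1)))))"

definition psi_minus :: "real \<Rightarrow> nat \<Rightarrow> (nat \<Rightarrow> real) \<Rightarrow> complex \<Rightarrow> complex" where
  "psi_minus g lam \<mu> t = of_real (4 * g^2) / sinh t *
     (\<Sum>\<gamma>=0..lam. (-1)^\<gamma> * sinh (t * of_real (1/2 - mu0 \<mu> \<gamma>)))^2"

definition psi_plus :: "real \<Rightarrow> nat \<Rightarrow> (nat \<Rightarrow> real) \<Rightarrow> complex \<Rightarrow> complex" where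
  "psi_plus g lam \<mu> t = of_real (4 * g^2) / sinh t *
     (\<Sum>\<gamma>=0..lam. (-1)^\<gamma> * cosh (t * of_real (1/2 - mu0 \<mu> \<gamma>)))^2"

definition admissible :: "nat \<Rightarrow> (nat \<Rightarrow> real) \<Rightarrow> bool" where
  "admissible lam \<mu> \<longleftrightarrow> 0 \<le> \<mu> 1 \<and> \<mu> lam \<le> 1 \<and> (\<forall>i. 1 \<le> i \<and> i < lam \<longrightarrow> \<mu> i \<le> \<mu> (Suc i))"

definition bdd_on_compacts :: "(complex \<Rightarrow> real) \<Rightarrow> bool" where
  "bdd_on_compacts f \<longleftrightarrow> (\<forall>K. compact K \<and> K \<subseteq> Rstar \<longrightarrow> (\<exists>B. \<forall>t\<in>K. \<bar>f t\<bar> \<le> B))"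

end

theory Submission
  imports Defs
begin

lemma Rstar_exp2: assumes "t \<in> Rstar" shows "exp (2*t) \<noteq> 1"
proof
  assume "exp (2*t) = 1"
  then obtain n::int where "Re t = 0" "Im (2*t) = of_int (2*n) * pi" by (auto simp: exp_eq_1)
  then have "t = of_int n * complex_of_real pi * \<i>"
    by (simp add: complex_eq_iff)
  with assms show False by (auto simp: Rstar_def)
qed

lemma Rstar_sinh: assumes "t \<in> Rstar" shows "sinh t \<noteq> 0"
proof
  assume "sinh t = 0"
  then have "exp t \<in> {1,-1}" by (simp add: sinh_zero_iff)
  moreover have "exp (2*t) = exp t * exp t" by (simp only: mult_2 exp_add)
  ultimately have "exp (2*t) = 1" by auto
  with Rstar_exp2[OF assms] show False by simp
qed

lemma Rstar_sinh2: assumes "t \<in> Rstar" shows "sinh (t/2) \<noteq> 0"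
proof
  assume "sinh (t/2) = 0"
  then have "sinh (2*(t/2)) = 0" by (simp only: sinh_double) simp
  with Rstar_sinh[OF assms] show False by simp
qed

lemma Rstar_den: assumes "t \<in> Rstar" shows "1 - exp (-2*t) \<noteq> 0"
proof
  assume "1 - exp (-2*t) = 0"
  then have "exp (-(2*t)) = 1" by simp
  then have "exp (2*t) = 1" by (metis exp_minus inverse_1 inverse_inverse_eq)
  with Rstar_exp2[OF assms] show False by simp
qed

lemma norm_exp_le: "cmod (exp z) \<le> exp (cmod z)"
  by (simp add: norm_exp_eq_Re complex_Re_le_cmod)

lemma cosh_bd: assumes "cmod z \<le> 1" shows "cmod (cosh (t*z)) \<le> exp (cmod t)"
proof -
  have a: "cmod (exp (t*z)) \<le> exp (cmod t)" "cmod (exp (-(t*z))) \<le> exp (cmod t)"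
  proof -
    have "cmod (t*z) \<le> cmod t" using assms by (simp add: norm_mult mult_left_le)
    then have "exp (cmod (t*z)) \<le> exp (cmod t)" by simp
    then show "cmod (exp (t*z)) \<le> exp (cmod t)" "cmod (exp (-(t*z))) \<le> exp (cmod t)"
      using norm_exp_le[of "t*z"] norm_exp_le[of "-(t*z)"] by auto
  qed
  have e: "cmod (cosh (t*z)) = cmod (exp (t*z) + exp (-(t*z)))/2"
    unfolding cosh_def by simp
  have "cmod (cosh (t*z)) \<le> (cmod (exp (t*z)) + cmod (exp (-(t*z))))/2"
    unfolding e using norm_triangle_ineq[of "exp (t*z)" "exp (-(t*z))"] by (simp add: divide_right_mono)
  with a show ?thesis by argo
qed

lemma sinh_bd: assumes "cmod z \<le> 1" shows "cmod (sinh (t*z)) \<le> exp (cmod t)"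
proof -
  have a: "cmod (exp (t*z)) \<le> exp (cmod t)" "cmod (exp (-(t*z))) \<le> exp (cmod t)"
  proof -
    have "cmod (t*z) \<le> cmod t" using assms by (simp add: norm_mult mult_left_le)
    then have "exp (cmod (t*z)) \<le> exp (cmod t)" by simp
    then show "cmod (exp (t*z)) \<le> exp (cmod t)" "cmod (exp (-(t*z))) \<le> exp (cmod t)"
      using norm_exp_le[of "t*z"] norm_exp_le[of "-(t*z)"] by auto
  qed
  have e: "cmod (sinh (t*z)) = cmod (exp (t*z) - exp (-(t*z)))/2"
    unfolding sinh_def by simp
  have "cmod (sinh (t*z)) \<le> (cmod (exp (t*z)) + cmod (exp (-(t*z))))/2"
    unfolding e using norm_triangle_ineq4[of "exp (t*z)" "exp (-(t*z))"] by (simp add: divide_right_mono)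
  with a show ?thesis by argo
qed

lemma cosh_lip: assumes "\<bar>a\<bar> \<le> 1" "\<bar>b\<bar> \<le> 1"
  shows "cmod (cosh (t * of_real a) - cosh (t * of_real b)) \<le> cmod t * exp (cmod t) * \<bar>a - b\<bar>"
proof -
  have "cmod ((\<lambda>z. cosh (t*z)) (of_real a) - (\<lambda>z. cosh (t*z)) (of_real b)) \<le> cmod t * exp (cmod t) * cmod (of_real a - of_real b)"
  proof (rule field_differentiable_bound[where S="cball 0 1" and f'="\<lambda>z. t * sinh (t*z)"])
    show "convex (cball (0::complex) 1)" by simp
    fix z :: complex assume "z \<in> cball 0 1"
    then have "cmod z \<le> 1" by simp
    then show "cmod (t * sinh (t*z)) \<le> cmod t * exp (cmod t)"
      by (simp add: norm_mult mult_left_mono sinh_bd)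
    show "((\<lambda>z. cosh (t*z)) has_field_derivative t * sinh (t*z)) (at z within cball 0 1)"
      by (auto intro!: derivative_eq_intros simp: mult.commute)
  qed (use assms in auto)
  then show ?thesis by (simp flip: of_real_diff)
qed

lemma sinh_lip: assumes "\<bar>a\<bar> \<le> 1" "\<bar>b\<bar> \<le> 1"
  shows "cmod (sinh (t * of_real a) - sinh (t * of_real b)) \<le> cmod t * exp (cmod t) * \<bar>a - b\<bar>"
proof -
  have "cmod ((\<lambda>z. sinh (t*z)) (of_real a) - (\<lambda>z. sinh (t*z)) (of_real b)) \<le> cmod t * exp (cmod t) * cmod (of_real a - of_real b)"
  proof (rule field_differentiable_bound[where S="cball 0 1" and f'="\<lambda>z. t * cosh (t*z)"])
    show "convex (cball (0::complex) 1)" by simp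
    fix z :: complex assume "z \<in> cball 0 1"
    then have "cmod z \<le> 1" by simp
    then show "cmod (t * cosh (t*z)) \<le> cmod t * exp (cmod t)"
      by (simp add: norm_mult mult_left_mono cosh_bd)
    show "((\<lambda>z. sinh (t*z)) has_field_derivative t * cosh (t*z)) (at z within cball 0 1)"
      by (auto intro!: derivative_eq_intros simp: mult.commute)
  qed (use assms in auto)
  then show ?thesis by (simp flip: of_real_diff)
qed


lemma norm_1_minus: "cmod (1 - complex_of_real a) = \<bar>1 - a\<bar>"
  by (metis of_real_1 of_real_diff norm_of_real)

lemma alt_sum_bound:
  fixes f :: "real \<Rightarrow> complex" and m :: "nat \<Rightarrow> real"
  assumes mono: "\<And>i. i < n \<Longrightarrow> m i \<le> m (Suc i)"
    and rng: "\<And>i. i \<le> n \<Longrightarrow> 0 \<le> m i \<and> m i \<le> 1"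
    and lip: "\<And>a b. 0 \<le> a \<Longrightarrow> a \<le> 1 \<Longrightarrow> 0 \<le> b \<Longrightarrow> b \<le> 1 \<Longrightarrow> cmod (f a - f b) \<le> L * \<bar>a - b\<bar>"
    and bd: "\<And>a. 0 \<le> a \<Longrightarrow> a \<le> 1 \<Longrightarrow> cmod (f a) \<le> M"
    and L: "L \<ge> 0"
  shows "cmod (\<Sum>\<gamma>=0..n. (-1)^\<gamma> * f (m \<gamma>)) \<le> L + M"
proof -
  define S where "S k = (\<Sum>\<gamma>=0..k. (-1)^\<gamma> * f (m \<gamma>))" for k
  have key: "k \<le> n \<Longrightarrow> (odd k \<longrightarrow> cmod (S k) \<le> L * (m k - m 0)) \<and>
                         (even k \<longrightarrow> cmod (S k - f (m k)) \<le> L * (m k - m 0))" for k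
  proof (induction k)
    case 0 then show ?case by (simp add: S_def)
  next
    case (Suc k)
    then have IH: "(odd k \<longrightarrow> cmod (S k) \<le> L * (m k - m 0)) \<and>
                   (even k \<longrightarrow> cmod (S k - f (m k)) \<le> L * (m k - m 0))" by simp
    have SS: "S (Suc k) = S k + (-1)^(Suc k) * f (m (Suc k))" by (simp add: S_def)
    have mk: "m k \<le> m (Suc k)" using mono Suc.prems by simp
    have r1: "0 \<le> m k" "m k \<le> 1" "0 \<le> m (Suc k)" "m (Suc k) \<le> 1" using rng Suc.prems by auto
    show ?case
    proof (cases "even k")
      case True
      then have "S (Suc k) = (S k - f (m k)) + (f (m k) - f (m (Suc k)))" by (simp add: SS)
      then have "cmod (S (Suc k)) \<le> cmod (S k - f (m k)) + cmod (f (m k) - f (m (Suc k)))"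
        by (metis norm_triangle_ineq)
      also have "\<dots> \<le> L * (m k - m 0) + L * \<bar>m k - m (Suc k)\<bar>"
        using IH True lip[OF r1] by (intro add_mono) auto
      also have "\<dots> = L * (m (Suc k) - m 0)" using mk by (simp add: algebra_simps)
      finally show ?thesis using True by simp
    next
      case False
      then have "S (Suc k) - f (m (Suc k)) = S k" by (simp add: SS)
      moreover have "L * (m k - m 0) \<le> L * (m (Suc k) - m 0)" using mk L by (simp add: mult_left_mono)
      ultimately show ?thesis using IH False by auto
    qed
  qed
  have r: "0 \<le> m n" "m n \<le> 1" "0 \<le> m 0" using rng by auto
  have M: "0 \<le> M" using bd[of 0] norm_ge_zero[of "f 0"] by linarith
  have Lb: "L * (m n - m 0) \<le> L" using r L by (simp add: mult_left_le)
  show ?thesis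
  proof (cases "even n")
    case True
    then have "cmod (S n - f (m n)) \<le> L * (m n - m 0)" using key by simp
    moreover have "cmod (S n) \<le> cmod (S n - f (m n)) + cmod (f (m n))"
      by (metis diff_add_cancel norm_triangle_ineq)
    moreover have "cmod (f (m n)) \<le> M" using bd r by simp
    ultimately show ?thesis using Lb by (simp add: S_def)
  next
    case False
    then have "cmod (S n) \<le> L * (m n - m 0)" using key by simp
    then show ?thesis using Lb M by (simp add: S_def)
  qed
qed

lemma adm_facts:
  assumes "admissible lam \<mu>" "lam \<ge> 1"
  shows "\<And>i. i < lam \<Longrightarrow> mu0 \<mu> i \<le> mu0 \<mu> (Suc i)"
    and "\<And>i. i \<le> lam \<Longrightarrow> 0 \<le> mu0 \<mu> i \<and> mu0 \<mu> i \<le> 1"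
    and "mu0 \<mu> 0 = 0"
proof -
  show mono: "\<And>i. i < lam \<Longrightarrow> mu0 \<mu> i \<le> mu0 \<mu> (Suc i)"
    using assms by (auto simp: admissible_def mu0_def)
  have mono2: "i \<le> j \<Longrightarrow> j \<le> lam \<Longrightarrow> mu0 \<mu> i \<le> mu0 \<mu> j" for i j
  proof (induction j rule: dec_induct)
    case (step j) then show ?case using mono[of j] by simp
  qed simp
  show "mu0 \<mu> 0 = 0" by (simp add: mu0_def)
  fix i assume "i \<le> lam"
  then show "0 \<le> mu0 \<mu> i \<and> mu0 \<mu> i \<le> 1"
    using mono2[of 0 i] mono2[of i lam] assms by (auto simp: mu0_def admissible_def split: if_splits)
qed


lemma dsum_gen:
  fixes A B :: "nat \<Rightarrow> complex"
  assumes "P \<subseteq> {..<n} \<times> {..<n}"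
  shows "cmod (\<Sum>(\<alpha>,\<beta>)\<in>P. A \<beta> * B \<alpha>) \<le> (\<Sum>\<alpha><n. cmod (B \<alpha>)) * (\<Sum>\<beta><n. cmod (A \<beta>))"
proof -
  have fin: "finite P" using assms finite_subset by blast
  have "cmod (\<Sum>(\<alpha>,\<beta>)\<in>P. A \<beta> * B \<alpha>) = cmod (\<Sum>p\<in>P. A (snd p) * B (fst p))"
    by (simp add: case_prod_beta')
  also have "\<dots> \<le> (\<Sum>p\<in>P. cmod (A (snd p)) * cmod (B (fst p)))"
    by (rule order_trans[OF norm_sum]) (simp add: norm_mult)
  also have "\<dots> \<le> (\<Sum>p\<in>{..<n} \<times> {..<n}. cmod (A (snd p)) * cmod (B (fst p)))"
    by (rule sum_mono2) (use assms in auto)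
  also have "\<dots> = (\<Sum>\<alpha><n. \<Sum>\<beta><n. cmod (B \<alpha>) * cmod (A \<beta>))"
    by (simp add: sum.cartesian_product case_prod_beta' mult.commute)
  also have "\<dots> = (\<Sum>\<alpha><n. cmod (B \<alpha>)) * (\<Sum>\<beta><n. cmod (A \<beta>))"
    by (simp add: sum_product)
  finally show ?thesis .
qed

lemma tele_bd:
  fixes m :: "nat \<Rightarrow> real" and F :: "nat \<Rightarrow> complex"
  assumes mono: "\<And>i. i < n \<Longrightarrow> m i \<le> m (Suc i)"
    and rng: "\<And>i. i \<le> n \<Longrightarrow> 0 \<le> m i \<and> m i \<le> 1"
    and Fb: "\<And>i. i < n \<Longrightarrow> cmod (F i) \<le> L * (m (Suc i) - m i)"
    and L: "L \<ge> 0"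
  shows "(\<Sum>i<n. cmod (F i)) \<le> L"
proof -
  have "(\<Sum>i<n. cmod (F i)) \<le> (\<Sum>i<n. L * (m (Suc i) - m i))"
    by (rule sum_mono) (use Fb in auto)
  also have "\<dots> = L * (m n - m 0)"
    by (simp add: sum_distrib_left[symmetric] sum_lessThan_telescope)
  also have "\<dots> \<le> L" using rng[of n] rng[of 0] L by (simp add: mult_left_le)
  finally show ?thesis .
qed

definition Bth :: "real \<Rightarrow> real \<Rightarrow> real \<Rightarrow> complex \<Rightarrow> real" where
  "Bth g x y t = 2 * \<bar>sqrt 2 * g\<bar> / cmod (sinh t) * (\<bar>x\<bar> * exp (cmod t) + \<bar>y\<bar>)
     + \<bar>sqrt 2 * g * (x - y)\<bar> * (cmod (cosh (t/2)) / cmod (sinh (t/2)))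
     + 2 * \<bar>sqrt 2 * g\<bar> / cmod (sinh t) * ((\<bar>x\<bar> + \<bar>y\<bar>) * (cmod t * exp (cmod t) + exp (cmod t)))"

definition Bps :: "real \<Rightarrow> complex \<Rightarrow> real" where
  "Bps g t = 4 * g^2 / cmod (sinh t) * (cmod t * exp (cmod t) + exp (cmod t))^2"

definition Bxi :: "real \<Rightarrow> complex \<Rightarrow> real" where
  "Bxi g t = 8 * g^2 / cmod (sinh t) * exp (cmod t)^2 * (cmod t * exp (cmod t) + exp (cmod t))
     + 4 * g^2 / cmod (sinh t) * (cmod t * exp (cmod t))^2"

lemma norm3: "cmod (a - b + c) \<le> cmod a + cmod b + cmod (c::complex)"
  using norm_triangle_ineq[of "a - b" c] norm_triangle_ineq4[of a b] by linarith

lemma theta_bd: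
  assumes "admissible lam \<mu>" "lam \<ge> 1"
  shows "cmod (theta g lam x y \<mu> t) \<le> Bth g x y t"
proof -
  note ad = adm_facts[OF assms]
  define m where "m = mu0 \<mu>"
  define E where "E = exp (cmod t)"
  define L where "L = cmod t * E"
  have L0: "L \<ge> 0" by (simp add: L_def E_def)
  define D where "D = 2 * \<bar>sqrt 2 * g\<bar> / cmod (sinh t)"
  have D0: "D \<ge> 0" by (simp add: D_def)
  define f where "f a = of_real x * cosh (t * of_real (1 - a)) - of_real y * cosh (t * of_real a)" for a
  have lip: "cmod (f a - f b) \<le> ((\<bar>x\<bar> + \<bar>y\<bar>) * L) * \<bar>a - b\<bar>"
    if "0 \<le> a" "a \<le> 1" "0 \<le> b" "b \<le> 1" for a b
  proof -
    have "f a - f b = of_real x * (cosh (t * of_real (1 - a)) - cosh (t * of_real (1 - b)))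
         - of_real y * (cosh (t * of_real a) - cosh (t * of_real b))"
      by (simp add: f_def algebra_simps)
    then have "cmod (f a - f b) \<le> \<bar>x\<bar> * cmod (cosh (t * of_real (1 - a)) - cosh (t * of_real (1 - b)))
         + \<bar>y\<bar> * cmod (cosh (t * of_real a) - cosh (t * of_real b))"
      by (metis norm_triangle_ineq4 norm_mult norm_of_real)
    also have "\<dots> \<le> \<bar>x\<bar> * (L * \<bar>a - b\<bar>) + \<bar>y\<bar> * (L * \<bar>a - b\<bar>)"
      using cosh_lip[of "1-a" "1-b" t] cosh_lip[of a b t] that
      by (intro add_mono mult_left_mono) (auto simp: L_def E_def abs_minus_commute)
    finally show ?thesis by (simp add: algebra_simps)
  qed
  have bd: "cmod (f a) \<le> (\<bar>x\<bar> + \<bar>y\<bar>) * E" if "0 \<le> a" "a \<le> 1" for a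
  proof -
    have "cmod (f a) \<le> \<bar>x\<bar> * cmod (cosh (t * of_real (1 - a))) + \<bar>y\<bar> * cmod (cosh (t * of_real a))"
      unfolding f_def by (metis norm_triangle_ineq4 norm_mult norm_of_real)
    also have "\<dots> \<le> \<bar>x\<bar> * E + \<bar>y\<bar> * E"
      using cosh_bd[of "of_real (1-a)" t] cosh_bd[of "of_real a" t] that
      by (intro add_mono mult_left_mono) (auto simp: E_def norm_1_minus)
    finally show ?thesis by (simp add: algebra_simps)
  qed
  have S: "cmod (\<Sum>\<gamma>=0..lam. (-1)^\<gamma> * f (m \<gamma>)) \<le> (\<bar>x\<bar> + \<bar>y\<bar>) * L + (\<bar>x\<bar> + \<bar>y\<bar>) * E"
    by (rule alt_sum_bound) (use ad lip bd L0 in \<open>auto simp: m_def\<close>)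
  have T3: "cmod (2 * of_real (sqrt 2 * g) * (-1)^lam / sinh t * (\<Sum>\<gamma>=0..lam. (-1)^\<gamma> * f (m \<gamma>)))
      \<le> D * ((\<bar>x\<bar> + \<bar>y\<bar>) * (L + E))"
  proof -
    have "cmod (2 * of_real (sqrt 2 * g) * (-1)^lam / sinh t * (\<Sum>\<gamma>=0..lam. (-1)^\<gamma> * f (m \<gamma>)))
        = D * cmod (\<Sum>\<gamma>=0..lam. (-1)^\<gamma> * f (m \<gamma>))"
      by (simp add: D_def norm_mult norm_divide norm_power abs_mult)
    also have "\<dots> \<le> D * ((\<bar>x\<bar> + \<bar>y\<bar>) * (L + E))"
      using S D0 by (intro mult_left_mono) (auto simp: algebra_simps)
    finally show ?thesis .
  qed
  have par: "cmod ((1 - (-1)^lam) / 2 :: complex) \<le> 1"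
    by (cases "even lam") auto
  have ch: "cmod (cosh t) \<le> E" using cosh_bd[of 1 t] by (simp add: E_def)
  have xy: "cmod (of_real x * cosh t - of_real y) \<le> \<bar>x\<bar> * E + \<bar>y\<bar>"
  proof -
    have "cmod (of_real x * cosh t - of_real y) \<le> \<bar>x\<bar> * cmod (cosh t) + \<bar>y\<bar>"
      by (metis norm_triangle_ineq4 norm_mult norm_of_real)
    also have "\<dots> \<le> \<bar>x\<bar> * E + \<bar>y\<bar>" using ch by (simp add: mult_left_mono)
    finally show ?thesis .
  qed
  have T1: "cmod (2 * of_real (sqrt 2 * g) / sinh t * (of_real x * cosh t - of_real y) * ((1 - (-1)^lam) / 2))
      \<le> D * (\<bar>x\<bar> * E + \<bar>y\<bar>)"
  proof -
    have "cmod (2 * of_real (sqrt 2 * g) / sinh t * (of_real x * cosh t - of_real y) * ((1 - (-1)^lam) / 2))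
       = D * cmod (of_real x * cosh t - of_real y) * cmod ((1 - (-1)^lam) / 2 :: complex)"
      by (simp add: D_def norm_mult norm_divide abs_mult)
    also have "\<dots> \<le> D * (\<bar>x\<bar> * E + \<bar>y\<bar>) * 1"
      using par xy D0 by (intro mult_mono mult_left_mono) (auto simp: E_def)
    finally show ?thesis by simp
  qed
  have T2: "cmod (of_real (sqrt 2 * g * (x - y)) * (cosh (t/2) / sinh (t/2)))
      = \<bar>sqrt 2 * g * (x - y)\<bar> * (cmod (cosh (t/2)) / cmod (sinh (t/2)))"
    by (simp only: norm_mult norm_divide norm_of_real)
  have eq: "theta g lam x y \<mu> t =
     2 * of_real (sqrt 2 * g) / sinh t * (of_real x * cosh t - of_real y) * ((1 - (-1)^lam) / 2)
     - of_real (sqrt 2 * g * (x - y)) * (cosh (t/2) / sinh (t/2))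
     + 2 * of_real (sqrt 2 * g) * (-1)^lam / sinh t * (\<Sum>\<gamma>=0..lam. (-1)^\<gamma> * f (m \<gamma>))"
    by (simp add: theta_def f_def m_def)
  have "cmod (theta g lam x y \<mu> t) \<le> D * (\<bar>x\<bar> * E + \<bar>y\<bar>)
     + \<bar>sqrt 2 * g * (x - y)\<bar> * (cmod (cosh (t/2)) / cmod (sinh (t/2)))
     + D * ((\<bar>x\<bar> + \<bar>y\<bar>) * (L + E))"
    unfolding eq by (rule order_trans[OF norm3 add_mono[OF add_mono[OF T1 T2[THEN eq_refl]] T3]])
  then show ?thesis by (simp add: Bth_def D_def E_def L_def)
qed


lemma psi_bd:
  assumes "admissible lam \<mu>" "lam \<ge> 1"
  shows "cmod (psi_minus g lam \<mu> t) \<le> Bps g t" "cmod (psi_plus g lam \<mu> t) \<le> Bps g t"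
proof -
  note ad = adm_facts[OF assms]
  define E where "E = exp (cmod t)"
  define L where "L = cmod t * E"
  have L0: "L \<ge> 0" by (simp add: L_def E_def)
  have K: "0 \<le> 4 * g^2 / cmod (sinh t)" by simp
  have S1: "cmod (\<Sum>\<gamma>=0..lam. (-1)^\<gamma> * (\<lambda>a. sinh (t * of_real (1/2 - a))) (mu0 \<mu> \<gamma>)) \<le> L + E"
  proof (rule alt_sum_bound[where m="mu0 \<mu>" and f="\<lambda>a. sinh (t * of_real (1/2 - a))"])
    fix a b :: real assume "0 \<le> a" "a \<le> 1" "0 \<le> b" "b \<le> 1"
    then show "cmod (sinh (t * of_real (1/2 - a)) - sinh (t * of_real (1/2 - b))) \<le> L * \<bar>a - b\<bar>"
      using sinh_lip[of "1/2-a" "1/2-b" t] by (auto simp: L_def E_def abs_minus_commute)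
  next
    fix a :: real assume "0 \<le> a" "a \<le> 1"
    then show "cmod (sinh (t * of_real (1/2 - a))) \<le> E"
      using sinh_bd[of "of_real (1/2-a)" t, unfolded norm_of_real] by (auto simp: E_def)
  qed (use ad L0 in auto)
  have S2: "cmod (\<Sum>\<gamma>=0..lam. (-1)^\<gamma> * (\<lambda>a. cosh (t * of_real (1/2 - a))) (mu0 \<mu> \<gamma>)) \<le> L + E"
  proof (rule alt_sum_bound[where m="mu0 \<mu>" and f="\<lambda>a. cosh (t * of_real (1/2 - a))"])
    fix a b :: real assume "0 \<le> a" "a \<le> 1" "0 \<le> b" "b \<le> 1"
    then show "cmod (cosh (t * of_real (1/2 - a)) - cosh (t * of_real (1/2 - b))) \<le> L * \<bar>a - b\<bar>"
      using cosh_lip[of "1/2-a" "1/2-b" t] by (auto simp: L_def E_def abs_minus_commute)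
  next
    fix a :: real assume "0 \<le> a" "a \<le> 1"
    then show "cmod (cosh (t * of_real (1/2 - a))) \<le> E"
      using cosh_bd[of "of_real (1/2-a)" t, unfolded norm_of_real] by (auto simp: E_def)
  qed (use ad L0 in auto)
  have "cmod (psi_minus g lam \<mu> t) = 4 * g^2 / cmod (sinh t) *
      cmod (\<Sum>\<gamma>=0..lam. (-1)^\<gamma> * (\<lambda>a. sinh (t * of_real (1/2 - a))) (mu0 \<mu> \<gamma>))^2"
    by (simp add: psi_minus_def norm_mult norm_divide norm_power)
  also have "\<dots> \<le> 4 * g^2 / cmod (sinh t) * (L + E)^2"
    using S1 by (intro mult_left_mono power_mono) auto
  finally have P1: "cmod (psi_minus g lam \<mu> t) \<le> Bps g t" by (simp add: Bps_def L_def E_def)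
  have "cmod (psi_plus g lam \<mu> t) = 4 * g^2 / cmod (sinh t) *
      cmod (\<Sum>\<gamma>=0..lam. (-1)^\<gamma> * (\<lambda>a. cosh (t * of_real (1/2 - a))) (mu0 \<mu> \<gamma>))^2"
    by (simp add: psi_plus_def norm_mult norm_divide norm_power)
  also have "\<dots> \<le> 4 * g^2 / cmod (sinh t) * (L + E)^2"
    using S2 by (intro mult_left_mono power_mono) auto
  finally have P2: "cmod (psi_plus g lam \<mu> t) \<le> Bps g t" by (simp add: Bps_def L_def E_def)
  show "cmod (psi_minus g lam \<mu> t) \<le> Bps g t" by (rule P1)
  show "cmod (psi_plus g lam \<mu> t) \<le> Bps g t" by (rule P2)
qed

lemma xi_bd:
  assumes "admissible lam \<mu>" "lam \<ge> 1"
  shows "cmod (xi g lam \<mu> t) \<le> Bxi g t"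
proof -
  note ad = adm_facts[OF assms]
  define m where "m = mu0 \<mu>"
  define E where "E = exp (cmod t)"
  define L where "L = cmod t * E"
  have L0: "L \<ge> 0" by (simp add: L_def E_def)
  have E0: "E \<ge> 0" by (simp add: E_def)
  have S1: "cmod (\<Sum>\<gamma>=0..lam. (-1)^\<gamma> * (\<lambda>a. cosh (t * of_real a)) (m \<gamma>)) \<le> L + E"
  proof (rule alt_sum_bound)
    fix a b :: real assume "0 \<le> a" "a \<le> 1" "0 \<le> b" "b \<le> 1"
    then show "cmod (cosh (t * of_real a) - cosh (t * of_real b)) \<le> L * \<bar>a - b\<bar>"
      using cosh_lip[of a b t] by (auto simp: L_def E_def)
  next
    fix a :: real assume "0 \<le> a" "a \<le> 1"
    then show "cmod (cosh (t * of_real a)) \<le> E"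
      using cosh_bd[of "of_real a" t] by (auto simp: E_def)
  qed (use ad L0 in \<open>auto simp: m_def\<close>)
  have sh: "cmod (sinh (t * of_real (1 - m lam) / 2)) \<le> E"
  proof -
    have "t * of_real (1 - m lam) / 2 = t * of_real ((1 - m lam) / 2)" by simp
    moreover have "cmod (of_real ((1 - m lam) / 2) :: complex) \<le> 1"
      unfolding norm_of_real using ad(2)[of lam] by (auto simp: m_def)
    ultimately show ?thesis using sinh_bd[of "of_real ((1 - m lam) / 2)" t] by (simp add: E_def)
  qed
  define A where "A \<beta> = cosh (t * of_real (m (\<beta>+1) - 1)) - cosh (t * of_real (m \<beta> - 1))" for \<beta>
  define B where "B \<alpha> = cosh (t * of_real (m \<alpha>)) - cosh (t * of_real (m (\<alpha>+1)))" for \<alpha>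
  define P where "P = {(\<alpha>,\<beta>). \<alpha> < \<beta> \<and> \<beta> \<le> lam - 1 \<and> odd (\<beta> - \<alpha>)}"
  have PS: "P \<subseteq> {..<lam} \<times> {..<lam}" using assms(2) by (auto simp: P_def)
  have SA: "(\<Sum>\<beta><lam. cmod (A \<beta>)) \<le> L"
  proof (rule tele_bd[where m=m])
    fix i assume i: "i < lam"
    have r: "0 \<le> m i" "m i \<le> 1" "0 \<le> m (Suc i)" "m (Suc i) \<le> 1" "m i \<le> m (Suc i)"
      using ad i by (auto simp: m_def)
    then show "cmod (A i) \<le> L * (m (Suc i) - m i)"
      using cosh_lip[of "m (Suc i) - 1" "m i - 1" t] by (auto simp: A_def L_def E_def)
  qed (use ad L0 in \<open>auto simp: m_def\<close>)
  have SB: "(\<Sum>\<alpha><lam. cmod (B \<alpha>)) \<le> L"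
  proof (rule tele_bd[where m=m])
    fix i assume i: "i < lam"
    have r: "0 \<le> m i" "m i \<le> 1" "0 \<le> m (Suc i)" "m (Suc i) \<le> 1" "m i \<le> m (Suc i)"
      using ad i by (auto simp: m_def)
    then show "cmod (B i) \<le> L * (m (Suc i) - m i)"
      using cosh_lip[of "m i" "m (Suc i)" t] by (auto simp: B_def L_def E_def)
  qed (use ad L0 in \<open>auto simp: m_def\<close>)
  have DS: "cmod (\<Sum>(\<alpha>,\<beta>)\<in>P. A \<beta> * B \<alpha>) \<le> L * L"
  proof -
    have "(\<Sum>\<alpha><lam. cmod (B \<alpha>)) * (\<Sum>\<beta><lam. cmod (A \<beta>)) \<le> L * L"
      by (rule mult_mono[OF SB SA L0]) (simp add: sum_nonneg)
    with dsum_gen[OF PS, of A B] show ?thesis by (rule order_trans)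
  qed
  have eq: "xi g lam \<mu> t =
     - of_real (8 * g^2) / sinh t * (sinh (t * of_real (1 - m lam) / 2))^2 * (-1)^lam
         * (\<Sum>\<gamma>=0..lam. (-1)^\<gamma> * (\<lambda>a. cosh (t * of_real a)) (m \<gamma>))
     - of_real (4 * g^2) / sinh t * (\<Sum>(\<alpha>,\<beta>)\<in>P. A \<beta> * B \<alpha>)"
    by (simp add: xi_def m_def A_def B_def P_def)
  have T1: "cmod (- of_real (8 * g^2) / sinh t * (sinh (t * of_real (1 - m lam) / 2))^2 * (-1)^lam
         * (\<Sum>\<gamma>=0..lam. (-1)^\<gamma> * (\<lambda>a. cosh (t * of_real a)) (m \<gamma>)))
      \<le> 8 * g^2 / cmod (sinh t) * E^2 * (L + E)"
  proof -
    have "cmod (- of_real (8 * g^2) / sinh t * (sinh (t * of_real (1 - m lam) / 2))^2 * (-1)^lam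
         * (\<Sum>\<gamma>=0..lam. (-1)^\<gamma> * (\<lambda>a. cosh (t * of_real a)) (m \<gamma>)))
       = 8 * g^2 / cmod (sinh t) * cmod (sinh (t * of_real (1 - m lam) / 2))^2
         * cmod (\<Sum>\<gamma>=0..lam. (-1)^\<gamma> * (\<lambda>a. cosh (t * of_real a)) (m \<gamma>))"
      by (simp add: norm_mult norm_divide norm_power)
    also have "\<dots> \<le> 8 * g^2 / cmod (sinh t) * E^2 * (L + E)"
      using sh S1 by (intro mult_mono mult_left_mono power_mono) auto
    finally show ?thesis .
  qed
  have T2: "cmod (of_real (4 * g^2) / sinh t * (\<Sum>(\<alpha>,\<beta>)\<in>P. A \<beta> * B \<alpha>))
      \<le> 4 * g^2 / cmod (sinh t) * (L * L)"
  proof -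
    have "cmod (of_real (4 * g^2) / sinh t * (\<Sum>(\<alpha>,\<beta>)\<in>P. A \<beta> * B \<alpha>))
       = 4 * g^2 / cmod (sinh t) * cmod (\<Sum>(\<alpha>,\<beta>)\<in>P. A \<beta> * B \<alpha>)"
      by (simp add: norm_mult norm_divide norm_power)
    also have "\<dots> \<le> 4 * g^2 / cmod (sinh t) * (L * L)"
      using DS by (intro mult_left_mono) auto
    finally show ?thesis .
  qed
  have "cmod (xi g lam \<mu> t) \<le> 8 * g^2 / cmod (sinh t) * E^2 * (L + E) + 4 * g^2 / cmod (sinh t) * (L * L)"
    unfolding eq using T1 T2 norm_triangle_ineq4[of "- of_real (8 * g^2) / sinh t * (sinh (t * of_real (1 - m lam) / 2))^2 * (-1)^lam
         * (\<Sum>\<gamma>=0..lam. (-1)^\<gamma> * (\<lambda>a. cosh (t * of_real a)) (m \<gamma>))" "of_real (4 * g^2) / sinh t * (\<Sum>(\<alpha>,\<beta>)\<in>P. A \<beta> * B \<alpha>)"] by linarith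
  then show ?thesis by (simp add: Bxi_def L_def E_def power2_eq_square)
qed


lemma bdd_cont: assumes "continuous_on Rstar f" shows "bdd_on_compacts f"
  unfolding bdd_on_compacts_def
proof (intro allI impI)
  fix K assume K: "compact K \<and> K \<subseteq> Rstar"
  then have "compact (f ` K)"
    using compact_continuous_image continuous_on_subset assms by blast
  then obtain B where "\<forall>z\<in>f ` K. norm z \<le> B" using compact_imp_bounded bounded_iff by metis
  then show "\<exists>B. \<forall>t\<in>K. \<bar>f t\<bar> \<le> B" by auto
qed

lemma fac: assumes "c \<noteq> 0" "t \<in> Rstar"
  shows "cmod (of_real c / (1 - exp (-2*t))) * (cmod (1 - exp (-2*t)) / \<bar>c\<bar> * B) = B"
  using Rstar_den[OF assms(2)] assms(1) by (simp add: norm_divide)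

lemma adm0: "admissible 1 (\<lambda>_. 0)" by (simp add: admissible_def)

lemma nonneg_B: "0 \<le> Bth g x y t" "0 \<le> Bps g t" "0 \<le> Bxi g t"
proof -
  show "0 \<le> Bth g x y t" using theta_bd[OF adm0 order_refl, of g x y t] norm_ge_zero by (rule order_trans[rotated])
  show "0 \<le> Bps g t" using psi_bd(1)[OF adm0 order_refl, of g t] norm_ge_zero by (rule order_trans[rotated])
  show "0 \<le> Bxi g t" using xi_bd[OF adm0 order_refl, of g t] norm_ge_zero by (rule order_trans[rotated])
qed

theorem mainTheorem8:
  fixes g :: real
  shows "\<exists>(C1 :: real \<Rightarrow> real \<Rightarrow> complex \<Rightarrow> real) (C2 :: complex \<Rightarrow> real) (C3 :: complex \<Rightarrow> real).
     (\<forall>x y t. t \<in> Rstar \<longrightarrow> C1 x y t \<ge> 0) \<and> (\<forall>t\<in>Rstar. C2 t \<ge> 0 \<and> C3 t \<ge> 0) \<and>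
     (\<forall>x y. bdd_on_compacts (C1 x y)) \<and> bdd_on_compacts C2 \<and> bdd_on_compacts C3 \<and>
     (\<forall>(lam::nat) \<mu> t x y. lam \<ge> 1 \<longrightarrow> t \<in> Rstar \<longrightarrow> admissible lam \<mu> \<longrightarrow>
        cmod (theta g lam x y \<mu> t) \<le> cmod (of_real (sqrt 2 * g) / (1 - exp (-2 * t))) * C1 x y t \<and>
        cmod (psi_minus g lam \<mu> t) \<le> cmod (of_real (2 * g^2) / (1 - exp (-2 * t))) * C2 t \<and>
        cmod (psi_plus g lam \<mu> t) \<le> cmod (of_real (2 * g^2) / (1 - exp (-2 * t))) * C2 t \<and>
        cmod (xi g lam \<mu> t) \<le> cmod (of_real (2 * g^2) / (1 - exp (-2 * t))) * C3 t * real lam)"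
proof (cases "g = 0")
  case True
  have z1: "theta g lam x y \<mu> t = 0" for lam x y \<mu> t using True by (simp add: theta_def)
  have z2: "xi g lam \<mu> t = 0" for lam \<mu> t using True by (simp add: xi_def)
  have z3: "psi_minus g lam \<mu> t = 0" for lam \<mu> t using True by (simp add: psi_minus_def)
  have z4: "psi_plus g lam \<mu> t = 0" for lam \<mu> t using True by (simp add: psi_plus_def)
  have b0: "bdd_on_compacts (\<lambda>t. 0)" unfolding bdd_on_compacts_def by auto
  show ?thesis
    by (rule exI[of _ "\<lambda>x y t. 0"], rule exI[of _ "\<lambda>t. 0"], rule exI[of _ "\<lambda>t. 0"])
      (simp add: z1 z2 z3 z4 b0)
next
  case False
  have c1: "sqrt 2 * g \<noteq> 0" and c2: "2 * g^2 \<noteq> 0" using False by auto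
  have sh: "t \<in> Rstar \<Longrightarrow> cmod (sinh t) \<noteq> 0" "t \<in> Rstar \<Longrightarrow> cmod (sinh (t/2)) \<noteq> 0" for t
    using Rstar_sinh Rstar_sinh2 by auto
  show ?thesis
  proof (rule exI[of _ "\<lambda>x y t. cmod (1 - exp (-2*t)) / \<bar>sqrt 2 * g\<bar> * Bth g x y t"],
         rule exI[of _ "\<lambda>t. cmod (1 - exp (-2*t)) / \<bar>2 * g^2\<bar> * Bps g t"],
         rule exI[of _ "\<lambda>t. cmod (1 - exp (-2*t)) / \<bar>2 * g^2\<bar> * Bxi g t"], intro conjI allI ballI impI)
    show "\<And>x y t. 0 \<le> cmod (1 - exp (-2*t)) / \<bar>sqrt 2 * g\<bar> * Bth g x y t"
      using nonneg_B by simp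
    show "\<And>t. 0 \<le> cmod (1 - exp (-2*t)) / \<bar>2 * g^2\<bar> * Bps g t"
      using nonneg_B by simp
    show "\<And>t. 0 \<le> cmod (1 - exp (-2*t)) / \<bar>2 * g^2\<bar> * Bxi g t"
      using nonneg_B by simp
    show "\<And>x y. bdd_on_compacts (\<lambda>t. cmod (1 - exp (-2*t)) / \<bar>sqrt 2 * g\<bar> * Bth g x y t)"
      using c1 sh unfolding Bth_def by (intro bdd_cont continuous_intros) auto
    show "bdd_on_compacts (\<lambda>t. cmod (1 - exp (-2*t)) / \<bar>2 * g^2\<bar> * Bps g t)"
      using c2 sh unfolding Bps_def by (intro bdd_cont continuous_intros) auto
    show "bdd_on_compacts (\<lambda>t. cmod (1 - exp (-2*t)) / \<bar>2 * g^2\<bar> * Bxi g t)"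
      using c2 sh unfolding Bxi_def by (intro bdd_cont continuous_intros) auto
  next
    fix lam :: nat and \<mu> t x y
    assume l: "1 \<le> lam" and t: "t \<in> Rstar" and a: "admissible lam \<mu>"
    show "cmod (theta g lam x y \<mu> t) \<le> cmod (of_real (sqrt 2 * g) / (1 - exp (-2 * t))) *
        (cmod (1 - exp (-2*t)) / \<bar>sqrt 2 * g\<bar> * Bth g x y t)"
      using theta_bd[OF a l] fac[OF c1 t] by simp
    show "cmod (psi_minus g lam \<mu> t) \<le> cmod (of_real (2 * g^2) / (1 - exp (-2 * t))) *
        (cmod (1 - exp (-2*t)) / \<bar>2 * g^2\<bar> * Bps g t)"
      using psi_bd(1)[OF a l] fac[OF c2 t] by simp
    show "cmod (psi_plus g lam \<mu> t) \<le> cmod (of_real (2 * g^2) / (1 - exp (-2 * t))) *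
        (cmod (1 - exp (-2*t)) / \<bar>2 * g^2\<bar> * Bps g t)"
      using psi_bd(2)[OF a l] fac[OF c2 t] by simp
    have "cmod (xi g lam \<mu> t) \<le> Bxi g t" by (rule xi_bd[OF a l])
    also have "\<dots> \<le> Bxi g t * real lam" using l nonneg_B(3)[of g t] by (simp add: mult_le_cancel_left1)
    finally show "cmod (xi g lam \<mu> t) \<le> cmod (of_real (2 * g^2) / (1 - exp (-2 * t))) *
        (cmod (1 - exp (-2*t)) / \<bar>2 * g^2\<bar> * Bxi g t) * real lam"
      using fac[OF c2 t, of "Bxi g t"] by simp
  qed
qed

end
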